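(* Let $\xi\in G$ and let $b\in Z^1(G,\pi_p)$ satisfy $b(\xi)=0$. (1) If $\xi$ is $\pi_p$-bounded, then $b(h)=0$ for all $h\in U_\xi$. (2) If $\xi$ is $\pi_p$-contracting, then $b(h)=0$ for all $h\in P_\xi$. (3) If $\xi$ is $\pi_p$-bounded, then $b(h)=0$ for all $h\in Z_\xi$.
   Context: $G$ is a locally compact second countable group with left Haar measure; $(\pi_0,V)$ is a continuous representation of $G$ on a separable Banach space $V$; for $p>1$, $\pi_p$ acts on the Bochner space $L^p(G,V)$ by $(\pi(g)f)(h)=\pi_0(g)(f(hg))$. $Z^1(G,\pi_p)$ is the space of continuous $b:G\to L^p(G,V)$ with $b(gh)=b(g)+\pi(g)b(h)$. $\xi$ is $\pi_p$-contracting if $\lim_n|||\pi(\xi^n)|||_{L^p(G,V)}=0$, and $\pi_p$-bounded if $\{\xi^n:n>0\}$ is not relatively compact and $\sup_{n>0}|||\pi(\xi^n)|||<\infty$. Define $U_\xi=\{h\in G:\xi^{-n}h\xi^n\to 1_G \text{ as } n\to+\infty\}$, $P_\xi=\{h\in G:(\xi^{-n}h\xi^n)_{n>0}\text{ is bounded (relatively compact)}\}$, $Z_\xi=\{h\in G:\xi^{-1}h\xi=h\}$. *)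

theory Defs
  imports "HOL-Analysis.Analysis" "HOL-Algebra.Group"
begin

text \<open>The group G is modelled as a HOL-Algebra group whose carrier is the whole
  type 'g; the topology of G is the topology of the type 'g.\<close>

definition lcsc_group :: "('g::{t2_space,second_countable_topology}) monoid \<Rightarrow> bool" where
  "lcsc_group G \<longleftrightarrow> group G \<and> carrier G = UNIV
     \<and> continuous_on UNIV (\<lambda>z::'g \<times> 'g. fst z \<otimes>\<^bsub>G\<^esub> snd z)
     \<and> continuous_on UNIV (\<lambda>x. inv\<^bsub>G\<^esub> x)
     \<and> (\<forall>x::'g. \<exists>U K. open U \<and> compact K \<and> x \<in> U \<and> U \<subseteq> K)"

text \<open>Left Haar measure (Radon-ness is automatic for Borel measures finite on
  compacts on an lcsc space).\<close>
definition left_haar :: "('g::{t2_space,second_countable_topology}) monoid \<Rightarrow> 'g measure \<Rightarrow> bool" where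
  "left_haar G \<mu> \<longleftrightarrow> sets \<mu> = sets borel
     \<and> (\<forall>g A. A \<in> sets borel \<longrightarrow> emeasure \<mu> ((\<lambda>x. g \<otimes>\<^bsub>G\<^esub> x) ` A) = emeasure \<mu> A)
     \<and> (\<forall>K. compact K \<longrightarrow> emeasure \<mu> K < \<infinity>)
     \<and> (\<forall>U. open U \<and> U \<noteq> {} \<longrightarrow> emeasure \<mu> U > 0)"

definition cont_rep :: "'g monoid \<Rightarrow> ('g::topological_space \<Rightarrow> ('v::real_normed_vector \<Rightarrow>\<^sub>L 'v)) \<Rightarrow> bool" where
  "cont_rep G \<pi>0 \<longleftrightarrow> (\<forall>g h. \<pi>0 (g \<otimes>\<^bsub>G\<^esub> h) = \<pi>0 g o\<^sub>L \<pi>0 h)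
     \<and> \<pi>0 \<one>\<^bsub>G\<^esub> = id_blinfun
     \<and> (\<forall>v. continuous_on UNIV (\<lambda>g. blinfun_apply (\<pi>0 g) v))"

text \<open>Bochner space L^p(G,V): representatives (equality is a.e. equality).\<close>
definition Lp :: "'g measure \<Rightarrow> real \<Rightarrow> ('g \<Rightarrow> 'v::{banach,second_countable_topology}) set" where
  "Lp \<mu> p = {f. f \<in> borel_measurable \<mu> \<and> integrable \<mu> (\<lambda>x. norm (f x) powr p)}"

definition Lpnorm :: "'g measure \<Rightarrow> real \<Rightarrow> ('g \<Rightarrow> 'v::{banach,second_countable_topology}) \<Rightarrow> real" where
  "Lpnorm \<mu> p f = (\<integral>x. norm (f x) powr p \<partial>\<mu>) powr (1/p)"

definition piL :: "'g monoid \<Rightarrow> ('g \<Rightarrow> ('v::real_normed_vector \<Rightarrow>\<^sub>L 'v)) \<Rightarrow> 'g \<Rightarrow> ('g \<Rightarrow> 'v) \<Rightarrow> ('g \<Rightarrow> 'v)" where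
  "piL G \<pi>0 g f = (\<lambda>h. blinfun_apply (\<pi>0 g) (f (h \<otimes>\<^bsub>G\<^esub> g)))"

definition opnorm_Lp :: "'g monoid \<Rightarrow> 'g measure \<Rightarrow> ('g \<Rightarrow> ('v::{banach,second_countable_topology} \<Rightarrow>\<^sub>L 'v)) \<Rightarrow> real \<Rightarrow> 'g \<Rightarrow> ereal" where
  "opnorm_Lp G \<mu> \<pi>0 p g =
     (SUP f\<in>{f \<in> Lp \<mu> p. Lpnorm \<mu> p f \<le> 1}. ereal (Lpnorm \<mu> p (piL G \<pi>0 g f)))"

definition Z1 :: "'g monoid \<Rightarrow> 'g measure \<Rightarrow> ('g::topological_space \<Rightarrow> ('v::{banach,second_countable_topology} \<Rightarrow>\<^sub>L 'v)) \<Rightarrow> real \<Rightarrow> ('g \<Rightarrow> 'g \<Rightarrow> 'v) \<Rightarrow> bool" where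
  "Z1 G \<mu> \<pi>0 p b \<longleftrightarrow> (\<forall>g. b g \<in> Lp \<mu> p)
     \<and> (\<forall>g0. ((\<lambda>g. Lpnorm \<mu> p (\<lambda>h. b g h - b g0 h)) \<longlongrightarrow> 0) (at g0))
     \<and> (\<forall>g g'. AE h in \<mu>. b (g \<otimes>\<^bsub>G\<^esub> g') h = b g h + piL G \<pi>0 g (b g') h)"

definition contracting :: "'g monoid \<Rightarrow> 'g measure \<Rightarrow> ('g \<Rightarrow> ('v::{banach,second_countable_topology} \<Rightarrow>\<^sub>L 'v)) \<Rightarrow> real \<Rightarrow> 'g \<Rightarrow> bool" where
  "contracting G \<mu> \<pi>0 p \<xi> \<longleftrightarrow> (\<lambda>n::nat. opnorm_Lp G \<mu> \<pi>0 p (\<xi> [^]\<^bsub>G\<^esub> n)) \<longlonglongrightarrow> 0"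

definition pbounded :: "'g monoid \<Rightarrow> 'g measure \<Rightarrow> ('g::topological_space \<Rightarrow> ('v::{banach,second_countable_topology} \<Rightarrow>\<^sub>L 'v)) \<Rightarrow> real \<Rightarrow> 'g \<Rightarrow> bool" where
  "pbounded G \<mu> \<pi>0 p \<xi> \<longleftrightarrow> \<not> compact (closure {\<xi> [^]\<^bsub>G\<^esub> (n::nat) | n. n > 0})
     \<and> (SUP n\<in>{0::nat<..}. opnorm_Lp G \<mu> \<pi>0 p (\<xi> [^]\<^bsub>G\<^esub> n)) < \<infinity>"

definition U_set :: "'g monoid \<Rightarrow> 'g::topological_space \<Rightarrow> 'g set" where
  "U_set G \<xi> = {h. (\<lambda>n::nat. inv\<^bsub>G\<^esub> (\<xi> [^]\<^bsub>G\<^esub> n) \<otimes>\<^bsub>G\<^esub> h \<otimes>\<^bsub>G\<^esub> (\<xi> [^]\<^bsub>G\<^esub> n)) \<longlonglongrightarrow> \<one>\<^bsub>G\<^esub>}"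

definition P_set :: "'g monoid \<Rightarrow> 'g::topological_space \<Rightarrow> 'g set" where
  "P_set G \<xi> = {h. compact (closure {inv\<^bsub>G\<^esub> (\<xi> [^]\<^bsub>G\<^esub> n) \<otimes>\<^bsub>G\<^esub> h \<otimes>\<^bsub>G\<^esub> (\<xi> [^]\<^bsub>G\<^esub> n) | n::nat. n > 0})}"

definition Z_set :: "'g monoid \<Rightarrow> 'g \<Rightarrow> 'g set" where
  "Z_set G \<xi> = {h. inv\<^bsub>G\<^esub> \<xi> \<otimes>\<^bsub>G\<^esub> h \<otimes>\<^bsub>G\<^esub> \<xi> = h}"

end

theory Submission
  imports Defs
begin

lemma powr_sum_le:
  fixes s t p :: real
  assumes "0 \<le> s" "0 \<le> t" "0 < p"
  shows "(s + t) powr p \<le> 2 powr p * (s powr p + t powr p)"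
proof -
  have "(s + t) powr p \<le> (2 * max s t) powr p"
    by (rule powr_mono2) (use assms in auto)
  also have "\<dots> = 2 powr p * max s t powr p" by (simp add: powr_mult)
  also have "max s t powr p \<le> s powr p + t powr p"
    by (cases "s \<le> t") (auto simp: max_def)
  hence "2 powr p * max s t powr p \<le> 2 powr p * (s powr p + t powr p)"
    by (intro mult_left_mono) auto
  finally show ?thesis .
qed

lemma Lpnorm_nonneg: "0 \<le> Lpnorm \<mu> p f"
  by (simp add: Lpnorm_def)

lemma Lpnorm_scale:
  assumes "0 < p"
  shows "Lpnorm \<mu> p (\<lambda>x. c *\<^sub>R f x) = \<bar>c\<bar> * Lpnorm \<mu> p f"
proof -
  have "(\<integral>x. norm (c *\<^sub>R f x) powr p \<partial>\<mu>) = \<bar>c\<bar> powr p * (\<integral>x. norm (f x) powr p \<partial>\<mu>)"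
    by (simp add: powr_mult)
  moreover have "0 \<le> (\<integral>x. norm (f x) powr p \<partial>\<mu>)" by (rule integral_nonneg_AE) auto
  ultimately show ?thesis using assms
    by (simp add: Lpnorm_def powr_mult powr_powr)
qed

lemma Lp_scale:
  assumes "f \<in> Lp \<mu> p"
  shows "(\<lambda>x. c *\<^sub>R f x) \<in> Lp \<mu> p"
proof -
  have "integrable \<mu> (\<lambda>x. \<bar>c\<bar> powr p * norm (f x) powr p)"
    using assms by (auto simp: Lp_def)
  then show ?thesis using assms by (auto simp: Lp_def powr_mult)
qed

lemma Lpnorm_cong_AE:
  assumes "f \<in> borel_measurable \<mu>" "g \<in> borel_measurable \<mu>" "AE x in \<mu>. f x = g x"
  shows "Lpnorm \<mu> p f = Lpnorm \<mu> p g"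
proof -
  have "(\<integral>x. norm (f x) powr p \<partial>\<mu>) = (\<integral>x. norm (g x) powr p \<partial>\<mu>)"
    by (rule integral_cong_AE) (use assms in auto)
  then show ?thesis by (simp add: Lpnorm_def)
qed

lemma Lpnorm_powr:
  assumes "0 < p"
  shows "Lpnorm \<mu> p f powr p = (\<integral>x. norm (f x) powr p \<partial>\<mu>)"
proof -
  have "0 \<le> (\<integral>x. norm (f x) powr p \<partial>\<mu>)" by (rule integral_nonneg_AE) auto
  then show ?thesis using assms by (simp add: Lpnorm_def powr_powr powr_one)
qed

lemma Lpnorm_zero_AE:
  assumes "f \<in> Lp \<mu> p" "(\<integral>x. norm (f x) powr p \<partial>\<mu>) = 0" "0 < p"
  shows "AE x in \<mu>. f x = 0"
proof -
  have "AE x in \<mu>. norm (f x) powr p = 0"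
    using assms integral_nonneg_eq_0_iff_AE[of \<mu> "\<lambda>x. norm (f x) powr p"]
    by (auto simp: Lp_def)
  then show ?thesis by eventually_elim simp
qed

lemma Lpnorm_zero_AE':
  assumes "f \<in> Lp \<mu> p" "Lpnorm \<mu> p f \<le> 0" "0 < p"
  shows "AE x in \<mu>. f x = 0"
proof -
  have "Lpnorm \<mu> p f = 0" using assms(2) Lpnorm_nonneg[of \<mu> p f] by linarith
  then have "(\<integral>x. norm (f x) powr p \<partial>\<mu>) = 0" using Lpnorm_powr[OF assms(3), of \<mu> f] assms(3) by simp
  then show ?thesis using Lpnorm_zero_AE assms by blast
qed

lemma opnorm_bound:
  fixes \<pi>0 :: "'g::{t2_space,second_countable_topology} \<Rightarrow> ('v::{banach,second_countable_topology} \<Rightarrow>\<^sub>L 'v)"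
  assumes M: "opnorm_Lp G \<mu> \<pi>0 p g \<le> ereal M" and f: "f \<in> Lp \<mu> p" and p: "0 < p"
  shows "Lpnorm \<mu> p (piL G \<pi>0 g f) \<le> M * Lpnorm \<mu> p f"
proof -
  let ?S = "{f \<in> Lp \<mu> p. Lpnorm \<mu> p f \<le> 1}"
  have up: "ereal (Lpnorm \<mu> p (piL G \<pi>0 g u)) \<le> ereal M" if "u \<in> ?S" for u
  proof -
    have "ereal (Lpnorm \<mu> p (piL G \<pi>0 g u)) \<le> opnorm_Lp G \<mu> \<pi>0 p g"
      unfolding opnorm_Lp_def by (rule SUP_upper) (use that in auto)
    then show ?thesis using M by (rule order.trans)
  qed
  have "(\<lambda>x. 0::'v) \<in> ?S" by (auto simp: Lp_def Lpnorm_def)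
  from up[OF this] have M0: "0 \<le> M" by (simp add: piL_def Lpnorm_def)
  define L where "L = Lpnorm \<mu> p f"
  have L0: "0 \<le> L" unfolding L_def by (rule Lpnorm_nonneg)
  have t: "Lpnorm \<mu> p (piL G \<pi>0 g f) \<le> t * M" if "L < t" for t
  proof -
    have t0: "0 < t" using that L0 by linarith
    let ?u = "\<lambda>x. (1/t) *\<^sub>R f x"
    have "Lpnorm \<mu> p ?u = L / t" using t0 by (simp add: Lpnorm_scale[OF p] L_def)
    also have "\<dots> \<le> 1" using that t0 by simp
    finally have "?u \<in> ?S" using Lp_scale[OF f] by auto
    from up[OF this] have "Lpnorm \<mu> p (piL G \<pi>0 g ?u) \<le> M" by simp
    moreover have "piL G \<pi>0 g ?u = (\<lambda>x. (1/t) *\<^sub>R piL G \<pi>0 g f x)"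
      by (simp add: piL_def blinfun.scaleR_right)
    ultimately have "(1/t) * Lpnorm \<mu> p (piL G \<pi>0 g f) \<le> M"
      using t0 by (simp add: Lpnorm_scale[OF p])
    then show ?thesis using t0 by (simp add: field_simps)
  qed
  show ?thesis
  proof (rule field_le_epsilon)
    fix e :: real assume e: "0 < e"
    have "Lpnorm \<mu> p (piL G \<pi>0 g f) \<le> (L + e/(M+1)) * M"
      using t[of "L + e/(M+1)"] e M0 by (simp add: add_pos_nonneg)
    also have "\<dots> = L * M + e * (M/(M+1))" using M0 by (simp add: field_simps)
    also have "\<dots> \<le> L * M + e * 1"
      using M0 e by (intro add_left_mono mult_left_mono) auto
    finally show "Lpnorm \<mu> p (piL G \<pi>0 g f) \<le> M * Lpnorm \<mu> p f + e" by (simp add: mult.commute L_def)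
  qed
qed

locale lcsc_haar =
  fixes G :: "('g::{t2_space,second_countable_topology}) monoid" (structure)
    and \<mu> :: "'g measure"
  assumes lcsc: "lcsc_group G" and haar: "left_haar G \<mu>"
begin

sublocale group G using lcsc unfolding lcsc_group_def by blast

lemmas LL = lcsc[unfolded lcsc_group_def]
lemmas HH = haar[unfolded left_haar_def]
lemma carr[simp]: "carrier G = UNIV" using LL by (elim conjE)
lemma cont_mult: "continuous_on UNIV (\<lambda>z::'g \<times> 'g. fst z \<otimes> snd z)"
  using LL by (elim conjE)
lemma cont_inv: "continuous_on UNIV (\<lambda>x. inv x)"
  using LL by (elim conjE)
lemma loc_compact_all: "\<forall>x::'g. \<exists>U K. open U \<and> compact K \<and> x \<in> U \<and> U \<subseteq> K"
  using LL by (elim conjE)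
lemma loc_compact: "\<exists>U K. open U \<and> compact K \<and> (x::'g) \<in> U \<and> U \<subseteq> K"
  using loc_compact_all by (rule spec)
lemma sets_mu[simp, measurable_cong]: "sets \<mu> = sets borel"
  using HH by (elim conjE)
lemma space_mu[simp]: "space \<mu> = UNIV"
  using sets_eq_imp_space_eq[OF sets_mu] by simp
lemma linv_all: "\<forall>g A. A \<in> sets borel \<longrightarrow> emeasure \<mu> ((\<lambda>x. g \<otimes> x) ` A) = emeasure \<mu> A"
  using HH by (elim conjE)
lemma fin_all: "\<forall>K. compact K \<longrightarrow> emeasure \<mu> K < \<infinity>"
  using HH by (elim conjE)
lemma pos_all: "\<forall>U. open U \<and> U \<noteq> {} \<longrightarrow> emeasure \<mu> U > 0"
  using HH by (elim conjE)
lemma linv: "A \<in> sets borel \<Longrightarrow> emeasure \<mu> ((\<lambda>x. g \<otimes> x) ` A) = emeasure \<mu> A"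
  using linv_all by blast
lemma fin: "compact K \<Longrightarrow> emeasure \<mu> K < \<infinity>"
  using fin_all by blast
lemma pos: "open U \<Longrightarrow> U \<noteq> {} \<Longrightarrow> emeasure \<mu> U > 0"
  using pos_all by blast

lemma cont_comp2:
  assumes "continuous_on UNIV f" "continuous_on UNIV g"
  shows "continuous_on UNIV (\<lambda>x. f x \<otimes> g x)"
proof -
  have "continuous_on UNIV (\<lambda>x. (f x, g x))"
    using assms by (intro continuous_on_Pair)
  from continuous_on_compose2[OF cont_mult this] show ?thesis by simp
qed

lemma cont_rmult: "continuous_on UNIV (\<lambda>x. x \<otimes> g)"
  by (rule cont_comp2) (auto intro: continuous_on_id continuous_on_const)
lemma cont_lmult: "continuous_on UNIV (\<lambda>x. g \<otimes> x)"
  by (rule cont_comp2) (auto intro: continuous_on_id continuous_on_const)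

lemma meas_cont:
  assumes "continuous_on UNIV f"
  shows "f \<in> measurable \<mu> \<mu>"
  using borel_measurable_continuous_onI[OF assms] measurable_cong_sets[OF sets_mu sets_mu] by simp

lemma meas_comp_rmult: "f \<in> borel_measurable \<mu> \<Longrightarrow> (\<lambda>x. f (x \<otimes> g)) \<in> borel_measurable \<mu>"
  using measurable_compose[OF meas_cont[OF cont_rmult]] by blast

lemma meas_blinfun: "f \<in> borel_measurable M \<Longrightarrow> (\<lambda>x. blinfun_apply A (f x)) \<in> borel_measurable M"
proof -
  have "continuous_on UNIV (blinfun_apply A)"
    by (rule linear_continuous_on) (rule blinfun.bounded_linear_right)
  from borel_measurable_continuous_onI[OF this]
  show "f \<in> borel_measurable M \<Longrightarrow> (\<lambda>x. blinfun_apply A (f x)) \<in> borel_measurable M"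
    using measurable_compose by blast
qed

lemma meas_piL: "f \<in> borel_measurable \<mu> \<Longrightarrow> piL G \<pi>0 g f \<in> borel_measurable \<mu>"
  unfolding piL_def by (intro meas_blinfun meas_comp_rmult)

lemma borel_preimage:
  assumes "continuous_on UNIV f" "E \<in> sets borel"
  shows "f -` E \<in> sets borel"
  using measurable_sets[OF borel_measurable_continuous_onI[OF assms(1)] assms(2)] by simp

lemma exhaustion: "\<exists>K::nat \<Rightarrow> 'g set. (\<forall>j. compact (K j)) \<and> incseq K \<and> (\<Union>j. K j) = UNIV"
proof -
  define F where "F = {U::'g set. open U \<and> (\<exists>K. compact K \<and> U \<subseteq> K)}"
  have FU: "\<Union>F = UNIV"
  proof (intro Set.set_eqI iffI)
    fix x :: 'g
    obtain U K where UK: "open U" "compact K" "x \<in> U" "U \<subseteq> K" using loc_compact[of x] by blast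
    have "U \<in> F" unfolding F_def using UK by blast
    then show "x \<in> \<Union>F" using UK(3) by (rule UnionI)
  qed simp
  have opF: "\<And>S. S \<in> F \<Longrightarrow> open S" unfolding F_def by blast
  obtain F' where F': "F' \<subseteq> F" "countable F'" "\<Union>F' = \<Union>F"
    using Lindelof[OF opF] by blast
  have ne: "F' \<noteq> {}" using F'(3) FU by auto
  define Kc where "Kc U = (SOME K. compact K \<and> U \<subseteq> K)" for U :: "'g set"
  have Kc: "compact (Kc U) \<and> U \<subseteq> Kc U" if "U \<in> F" for U
  proof -
    from that have "\<exists>K. compact K \<and> U \<subseteq> K" unfolding F_def by blast
    then show ?thesis unfolding Kc_def by (rule someI_ex)
  qed
  define K where "K j = (\<Union>i\<le>j. Kc (from_nat_into F' i))" for j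
  have "compact (K j)" for j
    unfolding K_def
  proof (intro compact_UN)
    fix i
    have "from_nat_into F' i \<in> F" using from_nat_into[OF ne, of i] F'(1) by (rule subsetD[rotated])
    then show "compact (Kc (from_nat_into F' i))" using Kc by blast
  qed simp
  moreover have "incseq K" unfolding K_def incseq_def by (intro allI impI UN_mono) auto
  moreover have "(\<Union>j. K j) = UNIV"
  proof -
    { fix x :: 'g
      have "x \<in> \<Union>F'" using F'(3) FU by simp
      then obtain U where U: "U \<in> F'" "x \<in> U" by (rule UnionE)
      obtain i where i: "from_nat_into F' i = U" using from_nat_into_surj[OF F'(2) U(1)] by blast
      have "U \<in> F" using U(1) F'(1) by (rule subsetD[rotated])
      then have "x \<in> Kc U" using Kc U(2) by blast
      then have "x \<in> K i" unfolding K_def using i by blast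
      then have "x \<in> (\<Union>j. K j)" by blast }
    then show ?thesis by blast
  qed
  ultimately show ?thesis by blast
qed

lemma sigma_fin: "sigma_finite_measure \<mu>"
proof -
  obtain K :: "nat \<Rightarrow> 'g set" where K: "\<forall>j. compact (K j)" "(\<Union>j. K j) = UNIV"
    using exhaustion by blast
  show ?thesis unfolding sigma_finite_measure_def
  proof (intro exI[of _ "range K"] conjI ballI)
    show "range K \<subseteq> sets \<mu>" using K by (auto intro: borel_closed compact_imp_closed)
    show "\<Union> (range K) = space \<mu>" using K by simp
    fix a assume "a \<in> range K"
    then show "emeasure \<mu> a \<noteq> \<infinity>" using K fin by (metis less_irrefl rangeE)
  qed simp
qed

lemma lmult_image: "(\<lambda>x. g \<otimes> x) ` A = (\<lambda>x. inv g \<otimes> x) -` A"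
proof (intro Set.set_eqI iffI)
  fix y assume "y \<in> (\<lambda>x. g \<otimes> x) ` A"
  then obtain a where a: "a \<in> A" "y = g \<otimes> a" by blast
  have "inv g \<otimes> y = a" unfolding a(2) by (simp add: m_assoc[symmetric])
  then show "y \<in> (\<lambda>x. inv g \<otimes> x) -` A" using a(1) by simp
next
  fix y assume "y \<in> (\<lambda>x. inv g \<otimes> x) -` A"
  moreover have "y = g \<otimes> (inv g \<otimes> y)" by (simp add: m_assoc[symmetric])
  ultimately show "y \<in> (\<lambda>x. g \<otimes> x) ` A" by blast
qed

lemma lmult_borel: "A \<in> sets borel \<Longrightarrow> (\<lambda>x. g \<otimes> x) ` A \<in> sets borel"
  unfolding lmult_image by (rule borel_preimage[OF cont_lmult])

lemma null_inv:
  assumes E: "E \<in> sets borel" "emeasure \<mu> E = 0"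
  shows "emeasure \<mu> ((\<lambda>x. inv x) -` E) = 0"
proof -
  interpret sf: sigma_finite_measure \<mu> by (rule sigma_fin)
  interpret pair_sigma_finite \<mu> \<mu> by (simp add: pair_sigma_finite_def sigma_fin)
  let ?Ei = "(\<lambda>x. inv x) -` E"
  have Ei: "?Ei \<in> sets borel" by (rule borel_preimage[OF cont_inv E(1)])
  define S where "S = (\<lambda>z. inv (snd z) \<otimes> fst z) -` E"
  have "continuous_on UNIV (\<lambda>z::'g\<times>'g. inv (snd z) \<otimes> fst z)"
  proof -
    have "continuous_on UNIV (\<lambda>z::'g\<times>'g. inv (snd z))"
      using continuous_on_compose2[OF cont_inv continuous_on_snd[OF continuous_on_id]] by simp
    moreover have "continuous_on UNIV (\<lambda>z::'g\<times>'g. (inv (snd z), fst z))"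
      using calculation by (intro continuous_on_Pair continuous_on_fst continuous_on_id)
    from continuous_on_compose2[OF cont_mult this] show ?thesis by simp
  qed
  then have "S \<in> sets borel" unfolding S_def by (rule borel_preimage) (rule E(1))
  moreover have "sets (\<mu> \<Otimes>\<^sub>M \<mu>) = sets (borel :: ('g \<times> 'g) measure)"
  proof -
    have "sets (\<mu> \<Otimes>\<^sub>M \<mu>) = sets (borel \<Otimes>\<^sub>M (borel::'g measure))"
      by (rule sets_pair_measure_cong) simp_all
    also have "\<dots> = sets (borel::('g\<times>'g) measure)" by (simp only: borel_prod)
    finally show ?thesis .
  qed
  ultimately have S: "S \<in> sets (\<mu> \<Otimes>\<^sub>M \<mu>)" by simp
  have s1: "Pair x -` S = (\<lambda>y. x \<otimes> y) ` ?Ei" for x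
    unfolding lmult_image S_def vimage_def by (simp add: inv_mult_group)
  have s2: "(\<lambda>x. (x, y)) -` S = (\<lambda>x. y \<otimes> x) ` E" for y
    unfolding lmult_image S_def vimage_def by simp
  have "emeasure (\<mu> \<Otimes>\<^sub>M \<mu>) S = (\<integral>\<^sup>+ x. emeasure \<mu> (Pair x -` S) \<partial>\<mu>)"
    by (rule sf.emeasure_pair_measure_alt[OF S])
  also have "\<dots> = (\<integral>\<^sup>+ x. emeasure \<mu> ?Ei \<partial>\<mu>)"
    unfolding s1 using linv[OF Ei] by simp
  also have "\<dots> = emeasure \<mu> ?Ei * emeasure \<mu> UNIV" by simp
  finally have A: "emeasure (\<mu> \<Otimes>\<^sub>M \<mu>) S = emeasure \<mu> ?Ei * emeasure \<mu> UNIV" .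
  have "emeasure (\<mu> \<Otimes>\<^sub>M \<mu>) S = (\<integral>\<^sup>+ y. emeasure \<mu> ((\<lambda>x. (x, y)) -` S) \<partial>\<mu>)"
    by (rule emeasure_pair_measure_alt2[OF S])
  also have "\<dots> = 0" unfolding s2 using linv[OF E(1)] E(2) by simp
  finally have "emeasure \<mu> ?Ei * emeasure \<mu> UNIV = 0" using A by simp
  moreover have "emeasure \<mu> UNIV > 0" by (rule pos) auto
  ultimately show ?thesis by (auto simp: mult_eq_0_iff)
qed

lemma null_rtrans:
  assumes N: "N \<in> sets borel" "emeasure \<mu> N = 0"
  shows "emeasure \<mu> ((\<lambda>x. x \<otimes> g) -` N) = 0"
proof -
  let ?Ni = "(\<lambda>x. inv x) -` N"
  have Ni: "?Ni \<in> sets borel" "emeasure \<mu> ?Ni = 0"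
    using borel_preimage[OF cont_inv N(1)] null_inv[OF N] by auto
  have gNi: "(\<lambda>x. g \<otimes> x) ` ?Ni \<in> sets borel" "emeasure \<mu> ((\<lambda>x. g \<otimes> x) ` ?Ni) = 0"
    using lmult_borel[OF Ni(1)] linv[OF Ni(1)] Ni(2) by auto
  have "(\<lambda>x. x \<otimes> g) -` N = (\<lambda>x. inv x) -` ((\<lambda>x. g \<otimes> x) ` ?Ni)"
    unfolding lmult_image vimage_def by (simp add: inv_mult_group)
  then show ?thesis using null_inv[OF gNi] by simp
qed

lemma AE_rtrans:
  assumes "AE x in \<mu>. P x"
  shows "AE x in \<mu>. P (x \<otimes> g)"
proof -
  from assms obtain N where N: "{x \<in> space \<mu>. \<not> P x} \<subseteq> N" "emeasure \<mu> N = 0" "N \<in> sets \<mu>"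
    by (rule AE_E)
  show ?thesis
  proof (rule AE_I)
    show "{x \<in> space \<mu>. \<not> P (x \<otimes> g)} \<subseteq> (\<lambda>x. x \<otimes> g) -` N" using N(1) by auto
    show "emeasure \<mu> ((\<lambda>x. x \<otimes> g) -` N) = 0" using null_rtrans N by simp
    show "(\<lambda>x. x \<otimes> g) -` N \<in> sets \<mu>" using borel_preimage[OF cont_rmult] N(3) by simp
  qed
qed

end

locale cocycle_setting = lcsc_haar +
  fixes \<pi>0 :: "'g::{t2_space,second_countable_topology} \<Rightarrow> ('v::{banach,second_countable_topology} \<Rightarrow>\<^sub>L 'v)"
    and p :: real and b :: "'g \<Rightarrow> 'g \<Rightarrow> 'v"
  assumes rep: "cont_rep G \<pi>0" and p1: "p > 1" and Z: "Z1 G \<mu> \<pi>0 p b"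
begin

lemmas RR = rep[unfolded cont_rep_def]
lemmas ZZ = Z[unfolded Z1_def]

lemma p0: "0 < p" using p1 by simp
lemma pi_one: "\<pi>0 \<one> = id_blinfun" using RR by (elim conjE)
lemma bLp: "b g \<in> Lp \<mu> p" using ZZ by (elim conjE) (erule spec)
lemma bmeas: "b g \<in> borel_measurable \<mu>" using bLp by (simp add: Lp_def)
lemma bcont_all: "\<forall>g0. ((\<lambda>g. Lpnorm \<mu> p (\<lambda>h. b g h - b g0 h)) \<longlongrightarrow> 0) (at g0)"
  using ZZ by (elim conjE)
lemma bcont: "((\<lambda>g. Lpnorm \<mu> p (\<lambda>h. b g h - b g0 h)) \<longlongrightarrow> 0) (at g0)"
  using bcont_all by (rule spec)
lemma coc_all: "\<forall>g g'. AE h in \<mu>. b (g \<otimes> g') h = b g h + piL G \<pi>0 g (b g') h"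
  using ZZ by (elim conjE)
lemma coc: "AE h in \<mu>. b (g \<otimes> g') h = b g h + blinfun_apply (\<pi>0 g) (b g' (h \<otimes> g))"
  using coc_all unfolding piL_def by blast

lemma b_one: "AE x in \<mu>. b \<one> x = 0"
  using coc[of \<one> \<one>] by eventually_elim (simp add: pi_one)

lemma b_pow:
  assumes "AE x in \<mu>. b \<xi> x = 0"
  shows "AE x in \<mu>. b (\<xi> [^] (n::nat)) x = 0"
proof (induction n)
  case 0 then show ?case using b_one by simp
next
  case (Suc n)
  have "AE x in \<mu>. b \<xi> (x \<otimes> \<xi> [^] n) = 0" by (rule AE_rtrans[OF assms])
  with coc[of "\<xi> [^] n" \<xi>] Suc show ?case by eventually_elim simp
qed

lemma key:
  assumes "AE x in \<mu>. b \<xi> x = 0"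
  shows "AE x in \<mu>. b h x = piL G \<pi>0 (\<xi> [^] (n::nat)) (b (inv (\<xi> [^] n) \<otimes> h \<otimes> \<xi> [^] n)) x"
proof -
  define a where "a = \<xi> [^] n"
  define k where "k = inv a \<otimes> h \<otimes> a"
  have ak: "a \<otimes> k = h \<otimes> a" unfolding k_def by (simp add: m_assoc[symmetric])
  have 3: "AE x in \<mu>. b a x = 0" unfolding a_def by (rule b_pow[OF assms])
  have 4: "AE x in \<mu>. b a (x \<otimes> h) = 0" by (rule AE_rtrans[OF 3])
  from coc[of a k] coc[of h a] 3 4
  have "AE x in \<mu>. b h x = piL G \<pi>0 a (b k) x"
    by eventually_elim (simp add: ak piL_def)
  then show ?thesis unfolding a_def k_def .
qed

lemma pbounded_M:
  assumes "pbounded G \<mu> \<pi>0 p \<xi>"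
  obtains M where "0 \<le> M" "\<And>n::nat. n > 0 \<Longrightarrow> opnorm_Lp G \<mu> \<pi>0 p (\<xi> [^] n) \<le> ereal M"
proof -
  let ?S = "SUP n\<in>{0::nat<..}. opnorm_Lp G \<mu> \<pi>0 p (\<xi> [^] n)"
  have S: "?S < \<infinity>" using assms by (simp add: pbounded_def)
  have up: "opnorm_Lp G \<mu> \<pi>0 p (\<xi> [^] n) \<le> ?S" if "n > 0" for n :: nat
    by (rule SUP_upper) (use that in auto)
  obtain M where "?S \<le> ereal M" using S by (cases ?S) auto
  then have "opnorm_Lp G \<mu> \<pi>0 p (\<xi> [^] n) \<le> ereal (max M 0)" if "n > 0" for n :: nat
    using up[OF that] by (meson ereal_less_eq(3) max.cobounded1 order_trans)
  then show ?thesis using that[of "max M 0"] by simp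
qed

lemma part1:
  assumes xi0: "AE x in \<mu>. b \<xi> x = 0" and pb: "pbounded G \<mu> \<pi>0 p \<xi>" and h: "h \<in> U_set G \<xi>"
  shows "AE x in \<mu>. b h x = 0"
proof -
  obtain M where M: "\<And>n::nat. n > 0 \<Longrightarrow> opnorm_Lp G \<mu> \<pi>0 p (\<xi> [^] n) \<le> ereal M"
    using pbounded_M[OF pb] by blast
  define k where "k n = inv (\<xi> [^] n) \<otimes> h \<otimes> \<xi> [^] n" for n :: nat
  have klim: "k \<longlonglongrightarrow> \<one>" using h unfolding U_set_def k_def by simp
  define F where "F g = Lpnorm \<mu> p (\<lambda>x. b g x - b \<one> x)" for g
  have "F \<one> = 0" by (simp add: F_def Lpnorm_def)
  then have "isCont F \<one>" unfolding continuous_at using bcont[of \<one>] by (simp add: F_def[abs_def])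
  from isCont_tendsto_compose[OF this klim] have Fk: "(\<lambda>n. F (k n)) \<longlonglongrightarrow> 0"
    using \<open>F \<one> = 0\<close> by simp
  have Fk2: "F g = Lpnorm \<mu> p (b g)" for g
    unfolding F_def by (rule Lpnorm_cong_AE) (use bmeas b_one in auto)
  have bd: "Lpnorm \<mu> p (b h) \<le> M * F (k n)" if "n \<ge> 1" for n
  proof -
    have "Lpnorm \<mu> p (b h) = Lpnorm \<mu> p (piL G \<pi>0 (\<xi> [^] n) (b (k n)))"
      unfolding k_def by (rule Lpnorm_cong_AE[OF bmeas meas_piL[OF bmeas] key[OF xi0]])
    also have "\<dots> \<le> M * Lpnorm \<mu> p (b (k n))"
      by (rule opnorm_bound[OF M bLp p0]) (use that in simp)
    finally show ?thesis by (simp add: Fk2)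
  qed
  have "(\<lambda>n. M * F (k n)) \<longlonglongrightarrow> M * 0" by (intro tendsto_mult_left Fk)
  then have "Lpnorm \<mu> p (b h) \<le> M * 0" by (rule LIMSEQ_le_const) (use bd in blast)
  then show ?thesis using Lpnorm_zero_AE'[OF bLp _ p0] by simp
qed


lemma int_nonneg: "0 \<le> (\<integral>x. norm (f x) powr p \<partial>\<mu>)"
  by (rule integral_nonneg_AE) auto

lemma bint: "integrable \<mu> (\<lambda>x. norm (b g x) powr p)"
  using bLp[of g] by (simp add: Lp_def)

lemma local_bound:
  "\<exists>U. open U \<and> g0 \<in> U \<and> (\<forall>g\<in>U. (\<integral>x. norm (b g x) powr p \<partial>\<mu>)
       \<le> 2 powr p * ((\<integral>x. norm (b g0 x) powr p \<partial>\<mu>) + 1))"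
proof -
  let ?I = "\<lambda>g. (\<integral>x. norm (b g x) powr p \<partial>\<mu>)"
  have two: "1 \<le> 2 powr p" using p0 by (intro ge_one_powr_ge_zero) auto
  have "\<forall>\<^sub>F g in at g0. Lpnorm \<mu> p (\<lambda>h. b g h - b g0 h) < 1"
    using order_tendstoD(2)[OF bcont[of g0]] by simp
  then obtain S where S: "open S" "g0 \<in> S"
    "\<And>g. g \<in> S \<Longrightarrow> g \<noteq> g0 \<Longrightarrow> Lpnorm \<mu> p (\<lambda>h. b g h - b g0 h) < 1"
    unfolding eventually_at_topological by blast
  have "?I g \<le> 2 powr p * (?I g0 + 1)" if g: "g \<in> S" for g
  proof (cases "g = g0")
    case True
    have "?I g0 \<le> 2 powr p * ?I g0" using mult_right_mono[OF two int_nonneg[of "b g0"]]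
      by simp
    also have "\<dots> \<le> 2 powr p * (?I g0 + 1)" by simp
    finally show ?thesis using True by simp
  next
    case False
    let ?D = "\<lambda>x. b g x - b g0 x"
    have LD: "Lpnorm \<mu> p ?D < 1" using S(3)[OF g False] .
    have "(\<integral>x. norm (?D x) powr p \<partial>\<mu>) = Lpnorm \<mu> p ?D powr p" by (simp add: Lpnorm_powr[OF p0])
    also have "\<dots> < 1 powr p"
      by (rule powr_less_mono2) (use p0 LD Lpnorm_nonneg in auto)
    finally have ID: "(\<integral>x. norm (?D x) powr p \<partial>\<mu>) < 1" by simp
    have meas: "(\<lambda>x. norm (?D x) powr p) \<in> borel_measurable \<mu>"
      using bmeas[of g] bmeas[of g0] by measurable
    have pw1: "norm (?D x) powr p \<le> 2 powr p * (norm (b g x) powr p + norm (b g0 x) powr p)" for x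
    proof -
      have "norm (?D x) powr p \<le> (norm (b g x) + norm (b g0 x)) powr p"
        by (rule powr_mono2) (use p0 norm_triangle_ineq4 in auto)
      also have "\<dots> \<le> 2 powr p * (norm (b g x) powr p + norm (b g0 x) powr p)"
        by (rule powr_sum_le) (use p0 in auto)
      finally show ?thesis .
    qed
    have intD: "integrable \<mu> (\<lambda>x. norm (?D x) powr p)"
    proof (rule Bochner_Integration.integrable_bound)
      show "integrable \<mu> (\<lambda>x. 2 powr p * (norm (b g x) powr p + norm (b g0 x) powr p))"
        using bint[of g] bint[of g0] by (intro integrable_mult_right Bochner_Integration.integrable_add)
      show "AE x in \<mu>. norm (norm (?D x) powr p) \<le> norm (2 powr p * (norm (b g x) powr p + norm (b g0 x) powr p))"
        using pw1 by (auto simp: abs_mult)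
    qed (rule meas)
    have pw2: "norm (b g x) powr p \<le> 2 powr p * (norm (?D x) powr p + norm (b g0 x) powr p)" for x
    proof -
      have "norm (b g x) powr p \<le> (norm (?D x) + norm (b g0 x)) powr p"
        by (rule powr_mono2) (use p0 norm_triangle_sub[of "b g x" "b g0 x"] in auto)
      also have "\<dots> \<le> 2 powr p * (norm (?D x) powr p + norm (b g0 x) powr p)"
        by (rule powr_sum_le) (use p0 in auto)
      finally show ?thesis .
    qed
    have "?I g \<le> (\<integral>x. 2 powr p * (norm (?D x) powr p + norm (b g0 x) powr p) \<partial>\<mu>)"
      by (rule integral_mono) (use bint intD pw2 in \<open>auto intro: integrable_mult_right Bochner_Integration.integrable_add\<close>)
    also have "\<dots> = 2 powr p * ((\<integral>x. norm (?D x) powr p \<partial>\<mu>) + ?I g0)"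
      using intD bint[of g0] by (simp add: Bochner_Integration.integral_add)
    also have "\<dots> \<le> 2 powr p * (1 + ?I g0)"
      using ID by (intro mult_left_mono) auto
    finally show ?thesis by (simp add: add.commute)
  qed
  then show ?thesis using S(1,2) by blast
qed

lemma compact_bound:
  assumes "compact C"
  shows "\<exists>B. \<forall>g\<in>C. Lpnorm \<mu> p (b g) \<le> B"
proof -
  let ?I = "\<lambda>g. (\<integral>x. norm (b g x) powr p \<partial>\<mu>)"
  let ?c = "\<lambda>g0. 2 powr p * (?I g0 + 1)"
  define U where "U g0 = (SOME U. open U \<and> g0 \<in> U \<and> (\<forall>g\<in>U. ?I g \<le> ?c g0))" for g0
  have U: "open (U g0) \<and> g0 \<in> U g0 \<and> (\<forall>g\<in>U g0. ?I g \<le> ?c g0)" for g0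
    unfolding U_def by (rule someI_ex) (rule local_bound)
  obtain C' where C': "C' \<subseteq> C" "finite C'" "C \<subseteq> (\<Union>g0\<in>C'. U g0)"
  proof (rule compactE_image[OF assms, of C U])
    show "\<And>T. T \<in> C \<Longrightarrow> open (U T)" using U by blast
    show "C \<subseteq> (\<Union>g0\<in>C. U g0)" using U by blast
  qed blast
  have cnn: "0 \<le> ?c g0" for g0 using int_nonneg[of "b g0"] by simp
  have "?I g \<le> (\<Sum>g0\<in>C'. ?c g0)" if gC: "g \<in> C" for g
  proof -
    obtain g0 where g0: "g0 \<in> C'" "g \<in> U g0" using C'(3) gC by blast
    have "?I g \<le> ?c g0" using U g0(2) by blast
    also have "\<dots> \<le> (\<Sum>g0\<in>C'. ?c g0)"
      by (rule member_le_sum) (use g0(1) C'(2) cnn in auto)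
    finally show ?thesis .
  qed
  then have "Lpnorm \<mu> p (b g) \<le> (\<Sum>g0\<in>C'. ?c g0) powr (1/p)" if "g \<in> C" for g
    unfolding Lpnorm_def using that p0 int_nonneg[of "b g"] by (intro powr_mono2) auto
  then show ?thesis by blast
qed

lemma part2:
  assumes xi0: "AE x in \<mu>. b \<xi> x = 0" and ct: "contracting G \<mu> \<pi>0 p \<xi>" and h: "h \<in> P_set G \<xi>"
  shows "AE x in \<mu>. b h x = 0"
proof -
  define k where "k n = inv (\<xi> [^] n) \<otimes> h \<otimes> \<xi> [^] n" for n :: nat
  have cpt: "compact (closure {k n | n. n > 0})" using h unfolding P_set_def k_def by simp
  obtain B0 where B0: "\<And>g. g \<in> closure {k n | n. n > 0} \<Longrightarrow> Lpnorm \<mu> p (b g) \<le> B0"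
    using compact_bound[OF cpt] by blast
  define B where "B = max B0 0"
  have B: "Lpnorm \<mu> p (b (k n)) \<le> B" if "n > 0" for n
  proof -
    have "k n \<in> {k n | n. n > 0}" using that by blast
    then have "k n \<in> closure {k n | n. n > 0}" by (rule subsetD[OF closure_subset])
    from B0[OF this] show ?thesis unfolding B_def by (simp add: le_max_iff_disj)
  qed
  have B0': "0 \<le> B" by (simp add: B_def)
  have lim: "(\<lambda>n::nat. opnorm_Lp G \<mu> \<pi>0 p (\<xi> [^] n)) \<longlonglongrightarrow> 0" using ct by (simp add: contracting_def)
  have "Lpnorm \<mu> p (b h) \<le> 0"
  proof (rule field_le_epsilon)
    fix e :: real assume e: "0 < e"
    define \<epsilon> where "\<epsilon> = e / (B + 1)"
    have eps: "0 < \<epsilon>" using e B0' by (simp add: \<epsilon>_def)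
    have "\<forall>\<^sub>F n::nat in sequentially. opnorm_Lp G \<mu> \<pi>0 p (\<xi> [^] n) < ereal \<epsilon>"
      by (rule order_tendstoD(2)[OF lim]) (use eps in simp)
    then obtain N :: nat where N: "\<And>n. n \<ge> N \<Longrightarrow> opnorm_Lp G \<mu> \<pi>0 p (\<xi> [^] n) < ereal \<epsilon>"
      unfolding eventually_sequentially by blast
    define n where "n = Suc N"
    have op: "opnorm_Lp G \<mu> \<pi>0 p (\<xi> [^] n) \<le> ereal \<epsilon>" using N[of n] by (simp add: n_def)
    have "Lpnorm \<mu> p (b h) = Lpnorm \<mu> p (piL G \<pi>0 (\<xi> [^] n) (b (k n)))"
      unfolding k_def by (rule Lpnorm_cong_AE[OF bmeas meas_piL[OF bmeas] key[OF xi0]])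
    also have "\<dots> \<le> \<epsilon> * Lpnorm \<mu> p (b (k n))" by (rule opnorm_bound[OF op bLp p0])
    also have "\<dots> \<le> \<epsilon> * B" using B[of n] eps by (intro mult_left_mono) (auto simp: n_def)
    also have "\<dots> \<le> e" using e B0' by (simp add: \<epsilon>_def field_simps)
    finally show "Lpnorm \<mu> p (b h) \<le> 0 + e" by simp
  qed
  then show ?thesis using Lpnorm_zero_AE'[OF bLp _ p0] by simp
qed


lemma ind_le: "norm (indicator A x *\<^sub>R (v::'w::real_normed_vector)) \<le> norm v"
  by (simp add: indicator_def)

lemma nonrel_compact_sep:
  assumes nc: "\<not> compact (closure {\<xi> [^] (n::nat) | n. n > 0})" and K: "compact K"
  shows "\<exists>n::nat. n > 0 \<and> (\<forall>x\<in>K. x \<otimes> \<xi> [^] n \<notin> K)"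
proof (rule ccontr)
  assume "\<not> (\<exists>n::nat. n > 0 \<and> (\<forall>x\<in>K. x \<otimes> \<xi> [^] n \<notin> K))"
  then have A: "\<And>n::nat. n > 0 \<Longrightarrow> \<exists>x\<in>K. x \<otimes> \<xi> [^] n \<in> K" by blast
  define \<phi> where "\<phi> = (\<lambda>z::'g\<times>'g. inv (fst z) \<otimes> snd z)"
  have "continuous_on UNIV (\<lambda>z::'g\<times>'g. inv (fst z))"
    using continuous_on_compose2[OF cont_inv continuous_on_fst[OF continuous_on_id]] by simp
  then have "continuous_on UNIV (\<lambda>z::'g\<times>'g. (inv (fst z), snd z))"
    by (intro continuous_on_Pair continuous_on_snd continuous_on_id)
  from continuous_on_compose2[OF cont_mult this] have c\<phi>: "continuous_on UNIV \<phi>"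
    unfolding \<phi>_def by simp
  let ?D = "\<phi> ` (K \<times> K)"
  have cD: "compact ?D"
    by (rule compact_continuous_image[OF continuous_on_subset[OF c\<phi>] compact_Times[OF K K]]) simp
  have sub: "{\<xi> [^] (n::nat) | n. n > 0} \<subseteq> ?D"
  proof
    fix y assume "y \<in> {\<xi> [^] (n::nat) | n. n > 0}"
    then obtain n :: nat where n: "n > 0" "y = \<xi> [^] n" by blast
    obtain x where x: "x \<in> K" "x \<otimes> \<xi> [^] n \<in> K" using A[OF n(1)] by blast
    have "y = \<phi> (x, x \<otimes> \<xi> [^] n)" unfolding \<phi>_def n(2) by (simp add: m_assoc[symmetric])
    moreover have "(x, x \<otimes> \<xi> [^] n) \<in> K \<times> K" using x by simp
    ultimately show "y \<in> ?D" by (rule image_eqI)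
  qed
  have "closure {\<xi> [^] (n::nat) | n. n > 0} \<subseteq> ?D"
    by (rule closure_minimal[OF sub compact_imp_closed[OF cD]])
  then have "?D \<inter> closure {\<xi> [^] (n::nat) | n. n > 0} = closure {\<xi> [^] (n::nat) | n. n > 0}" by blast
  moreover have "compact (?D \<inter> closure {\<xi> [^] (n::nat) | n. n > 0})"
    by (rule compact_Int_closed[OF cD closed_closure])
  ultimately show False using nc by simp
qed

lemma exists_small_tail:
  assumes f: "f \<in> Lp \<mu> p" and e: "e > 0"
  shows "\<exists>K. compact K \<and> (\<integral>x. norm (indicator (-K) x *\<^sub>R f x) powr p \<partial>\<mu>) < e"
proof -
  obtain K :: "nat \<Rightarrow> 'g set" where K: "\<forall>j. compact (K j)" "incseq K" "(\<Union>j. K j) = UNIV"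
    using exhaustion by blast
  have fm: "f \<in> borel_measurable \<mu>" and fi: "integrable \<mu> (\<lambda>x. norm (f x) powr p)"
    using f by (auto simp: Lp_def)
  have Ks: "-K j \<in> sets \<mu>" for j
    using K(1) by (simp add: borel_open open_Compl compact_imp_closed)
  have meas: "(\<lambda>x. norm (indicator (-K j) x *\<^sub>R f x) powr p) \<in> borel_measurable \<mu>" for j
  proof -
    note [measurable] = Ks[of j] fm
    show ?thesis by measurable
  qed
  have lim: "AE x in \<mu>. (\<lambda>j. norm (indicator (-K j) x *\<^sub>R f x) powr p) \<longlonglongrightarrow> 0"
  proof (rule AE_I2)
    fix x :: 'g
    obtain j0 where j0: "x \<in> K j0" using K(3) by blast
    have "\<forall>\<^sub>F j in sequentially. norm (indicator (-K j) x *\<^sub>R f x) powr p = 0"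
      unfolding eventually_sequentially
    proof (intro exI allI impI)
      fix j assume "j0 \<le> j"
      then have "x \<in> K j" using K(2) j0 by (auto simp: incseq_def)
      then show "norm (indicator (-K j) x *\<^sub>R f x) powr p = 0" by simp
    qed
    then show "(\<lambda>j. norm (indicator (-K j) x *\<^sub>R f x) powr p) \<longlonglongrightarrow> 0"
      by (rule tendsto_eventually)
  qed
  have bd: "AE x in \<mu>. norm (norm (indicator (-K j) x *\<^sub>R f x) powr p) \<le> norm (f x) powr p" for j
  proof (rule AE_I2)
    fix x
    have "norm (indicator (-K j) x *\<^sub>R f x) powr p \<le> norm (f x) powr p"
      by (rule powr_mono2) (use p0 ind_le in auto)
    then show "norm (norm (indicator (-K j) x *\<^sub>R f x) powr p) \<le> norm (f x) powr p" by simp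
  qed
  have conv: "(\<lambda>j. (\<integral>x. norm (indicator (-K j) x *\<^sub>R f x) powr p \<partial>\<mu>)) \<longlonglongrightarrow> (\<integral>x. 0 \<partial>\<mu>)"
    by (rule integral_dominated_convergence[OF _ meas fi lim bd]) simp
  have "\<forall>\<^sub>F j in sequentially. (\<integral>x. norm (indicator (-K j) x *\<^sub>R f x) powr p \<partial>\<mu>) < e"
    using order_tendstoD(2)[OF conv] e by simp
  then obtain N where "\<forall>j\<ge>N. (\<integral>x. norm (indicator (-K j) x *\<^sub>R f x) powr p \<partial>\<mu>) < e"
    unfolding eventually_sequentially by blast
  then obtain j where "(\<integral>x. norm (indicator (-K j) x *\<^sub>R f x) powr p \<partial>\<mu>) < e"
    by blast
  then show ?thesis using K(1) by blast
qed

lemma part3: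
  assumes xi0: "AE x in \<mu>. b \<xi> x = 0" and pb: "pbounded G \<mu> \<pi>0 p \<xi>" and h: "h \<in> Z_set G \<xi>"
  shows "AE x in \<mu>. b h x = 0"
proof -
  obtain M where M0: "0 \<le> M" and M: "\<And>n::nat. n > 0 \<Longrightarrow> opnorm_Lp G \<mu> \<pi>0 p (\<xi> [^] n) \<le> ereal M"
    using pbounded_M[OF pb] by blast
  have nc: "\<not> compact (closure {\<xi> [^] (n::nat) | n. n > 0})" using pb by (simp add: pbounded_def)
  have hZ: "inv \<xi> \<otimes> h \<otimes> \<xi> = h" using h by (simp add: Z_set_def)
  have kn: "inv (\<xi> [^] n) \<otimes> h \<otimes> \<xi> [^] n = h" for n :: nat
  proof (induction n)
    case 0 then show ?case by simp
  next
    case (Suc n)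
    have "inv (\<xi> [^] Suc n) \<otimes> h \<otimes> \<xi> [^] Suc n = inv \<xi> \<otimes> (inv (\<xi> [^] n) \<otimes> h \<otimes> \<xi> [^] n) \<otimes> \<xi>"
      by (simp add: inv_mult_group m_assoc)
    also have "\<dots> = inv \<xi> \<otimes> h \<otimes> \<xi>" by (simp only: Suc.IH)
    also have "\<dots> = h" by (rule hZ)
    finally show ?case .
  qed
  define f where "f = b h"
  have fixr: "AE x in \<mu>. f x = piL G \<pi>0 (\<xi> [^] n) f x" for n :: nat
    using key[OF xi0, of h n] unfolding kn f_def .
  have fLp: "f \<in> Lp \<mu> p" unfolding f_def by (rule bLp)
  have fm: "f \<in> borel_measurable \<mu>" unfolding f_def by (rule bmeas)
  have fi: "integrable \<mu> (\<lambda>x. norm (f x) powr p)" unfolding f_def by (rule bint)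
  let ?If = "(\<integral>x. norm (f x) powr p \<partial>\<mu>)"
  have "?If \<le> 0"
  proof (rule field_le_epsilon)
    fix e :: real assume e: "0 < e"
    define \<epsilon> where "\<epsilon> = e / (M powr p + 1)"
    have eps: "0 < \<epsilon>" using e by (simp add: \<epsilon>_def add_nonneg_pos)
    obtain K where K: "compact K" and tail: "(\<integral>x. norm (indicator (-K) x *\<^sub>R f x) powr p \<partial>\<mu>) < \<epsilon>"
      using exists_small_tail[OF fLp eps] by blast
    obtain n :: nat where n: "n > 0" "\<And>x. x \<in> K \<Longrightarrow> x \<otimes> \<xi> [^] n \<notin> K"
      using nonrel_compact_sep[OF nc K] by blast
    define a where "a = \<xi> [^] n"
    define u where "u = (\<lambda>x. indicator (-K) x *\<^sub>R f x)"
    have Ks: "-K \<in> sets \<mu>" using K by (simp add: borel_open open_Compl compact_imp_closed)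
    have um: "u \<in> borel_measurable \<mu>"
    proof -
      note [measurable] = Ks fm
      show ?thesis unfolding u_def by measurable
    qed
    have ui: "integrable \<mu> (\<lambda>x. norm (u x) powr p)"
    proof (rule Bochner_Integration.integrable_bound[OF fi])
      show "(\<lambda>x. norm (u x) powr p) \<in> borel_measurable \<mu>" using um by measurable
      show "AE x in \<mu>. norm (norm (u x) powr p) \<le> norm (norm (f x) powr p)"
      proof (rule AE_I2)
        fix x
        have "norm (u x) powr p \<le> norm (f x) powr p"
          unfolding u_def by (rule powr_mono2) (use p0 ind_le in auto)
        then show "norm (norm (u x) powr p) \<le> norm (norm (f x) powr p)" by simp
      qed
    qed
    have uLp: "u \<in> Lp \<mu> p" using um ui by (simp add: Lp_def)
    define v where "v = piL G \<pi>0 a u"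
    have v_eq: "v x = indicator (-K) (x \<otimes> a) *\<^sub>R piL G \<pi>0 a f x" for x
      by (simp add: v_def piL_def u_def blinfun.scaleR_right)
    have vm: "v \<in> borel_measurable \<mu>" unfolding v_def by (rule meas_piL[OF um])
    have fixa: "AE x in \<mu>. f x = piL G \<pi>0 a f x" unfolding a_def by (rule fixr)
    have vi: "integrable \<mu> (\<lambda>x. norm (v x) powr p)"
    proof (rule Bochner_Integration.integrable_bound[OF fi])
      show "(\<lambda>x. norm (v x) powr p) \<in> borel_measurable \<mu>" using vm by measurable
      show "AE x in \<mu>. norm (norm (v x) powr p) \<le> norm (norm (f x) powr p)"
        using fixa
      proof eventually_elim
        case (elim x)
        have "norm (v x) powr p \<le> norm (f x) powr p"
          unfolding v_eq elim[symmetric] by (rule powr_mono2) (use p0 ind_le in auto)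
        then show ?case by simp
      qed
    qed
    have pw: "AE x in \<mu>. norm (f x) powr p \<le> norm (v x) powr p + norm (u x) powr p"
      using fixa
    proof eventually_elim
      case (elim x)
      show ?case
      proof (cases "x \<in> K")
        case True
        then have "x \<otimes> a \<notin> K" using n(2) unfolding a_def by blast
        then have "v x = f x" unfolding v_eq elim[symmetric] by simp
        then show ?thesis by simp
      next
        case False
        then have "u x = f x" by (simp add: u_def)
        then show ?thesis by simp
      qed
    qed
    have "?If \<le> (\<integral>x. norm (v x) powr p + norm (u x) powr p \<partial>\<mu>)"
      by (rule integral_mono_AE[OF fi _ pw]) (use vi ui in simp)
    also have "\<dots> = (\<integral>x. norm (v x) powr p \<partial>\<mu>) + (\<integral>x. norm (u x) powr p \<partial>\<mu>)"
      by (rule Bochner_Integration.integral_add[OF vi ui])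
    also have "(\<integral>x. norm (v x) powr p \<partial>\<mu>) \<le> M powr p * (\<integral>x. norm (u x) powr p \<partial>\<mu>)"
    proof -
      have opa: "opnorm_Lp G \<mu> \<pi>0 p a \<le> ereal M" unfolding a_def by (rule M[OF n(1)])
      have "(\<integral>x. norm (v x) powr p \<partial>\<mu>) = Lpnorm \<mu> p v powr p" by (simp add: Lpnorm_powr[OF p0])
      also have "\<dots> \<le> (M * Lpnorm \<mu> p u) powr p"
        unfolding v_def by (rule powr_mono2) (use p0 Lpnorm_nonneg opnorm_bound[OF opa uLp p0] in auto)
      also have "\<dots> = M powr p * (\<integral>x. norm (u x) powr p \<partial>\<mu>)" by (simp add: powr_mult Lpnorm_powr[OF p0])
      finally show ?thesis .
    qed
    then have "(\<integral>x. norm (v x) powr p \<partial>\<mu>) + (\<integral>x. norm (u x) powr p \<partial>\<mu>)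
        \<le> (M powr p + 1) * (\<integral>x. norm (u x) powr p \<partial>\<mu>)" by (simp add: algebra_simps)
    also have "\<dots> \<le> (M powr p + 1) * \<epsilon>"
      using tail unfolding u_def by (intro mult_left_mono) auto
    also have "\<dots> = e"
    proof -
      have "0 < M powr p + 1" by (rule add_nonneg_pos) auto
      then show ?thesis unfolding \<epsilon>_def by simp
    qed
    finally show "?If \<le> 0 + e" by simp
  qed
  then have "?If = 0" using int_nonneg[of f] by linarith
  then show ?thesis using Lpnorm_zero_AE[OF fLp _ p0] unfolding f_def by simp
qed

end


theorem proposition2:
  fixes G :: "('g::{t2_space,second_countable_topology}) monoid"
    and \<mu> :: "'g measure"
    and \<pi>0 :: "'g \<Rightarrow> ('v::{banach,second_countable_topology} \<Rightarrow>\<^sub>L 'v)"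
    and p :: real and \<xi> :: 'g and b :: "'g \<Rightarrow> 'g \<Rightarrow> 'v"
  assumes "lcsc_group G" and "left_haar G \<mu>" and "cont_rep G \<pi>0" and "p > 1"
    and "Z1 G \<mu> \<pi>0 p b"
    and "AE x in \<mu>. b \<xi> x = 0"
  shows "(pbounded G \<mu> \<pi>0 p \<xi> \<longrightarrow> (\<forall>h \<in> U_set G \<xi>. AE x in \<mu>. b h x = 0))
       \<and> (contracting G \<mu> \<pi>0 p \<xi> \<longrightarrow> (\<forall>h \<in> P_set G \<xi>. AE x in \<mu>. b h x = 0))
       \<and> (pbounded G \<mu> \<pi>0 p \<xi> \<longrightarrow> (\<forall>h \<in> Z_set G \<xi>. AE x in \<mu>. b h x = 0))"
proof -
  interpret C: cocycle_setting G \<mu> \<pi>0 p b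
    unfolding cocycle_setting_def cocycle_setting_axioms_def lcsc_haar_def using assms by auto
  show ?thesis using C.part1[OF assms(6)] C.part2[OF assms(6)] C.part3[OF assms(6)] by blast
qed

end
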